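(* Let $M=T^*\mathbb{T}^2=\{(\phi,\theta,s,t):\phi,\theta\in\mathbb{R}/\pi\mathbb{Z},\ s,t\in\mathbb{R}\}$, $Z=\{\phi=0\}$, and let $\omega_1=\frac{1}{\sin^2\phi}d\phi\wedge d\theta+ds\wedge dt$ and $\omega_2=\frac1{\sin^2\phi}d\phi\wedge ds+d\theta\wedge dt$. Then the symplectic manifolds $(M\setminus Z,\omega_1)$ and $(M\setminus Z,\omega_2)$ are symplectomorphic. *)

theory Defs
  imports "HOL-Analysis.Analysis"
begin

text \<open>Points of T*T^2 are lifted to the universal cover R^4 with coordinates
 (phi, theta, s, t); the actual manifold is the quotient by the lattice
 pi Z x pi Z x 0 x 0.\<close>

type_synonym pt = "real \<times> real \<times> real \<times> real"

definition same_pt :: "pt \<Rightarrow> pt \<Rightarrow> bool" where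
  "same_pt x y \<longleftrightarrow> (case x of (p, th, s, t) \<Rightarrow> case y of (p', th', s', t') \<Rightarrow>
      (\<exists>a b :: int. p' = p + of_int a * pi \<and> th' = th + of_int b * pi) \<and> s' = s \<and> t' = t)"

text \<open>Preimage of M minus Z, Z = {phi = 0}, in the cover.\<close>
definition MZ :: "pt set" where
  "MZ = {(p, th, s, t). sin p \<noteq> 0}"

fun Ck_on :: "nat \<Rightarrow> 'a::real_normed_vector set \<Rightarrow> ('a \<Rightarrow> 'b::real_normed_vector) \<Rightarrow> bool" where
  "Ck_on 0 U f \<longleftrightarrow> continuous_on U f"
| "Ck_on (Suc k) U f \<longleftrightarrow> f differentiable_on U \<and>
     (\<forall>v. Ck_on k U (\<lambda>x. frechet_derivative f (at x) v))"

definition smooth_on :: "'a::real_normed_vector set \<Rightarrow> ('a \<Rightarrow> 'b::real_normed_vector) \<Rightarrow> bool" where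
  "smooth_on U f \<longleftrightarrow> (\<forall>k. Ck_on k U f)"

definition omega1 :: "pt \<Rightarrow> pt \<Rightarrow> pt \<Rightarrow> real" where
  "omega1 x v w = (case x of (p, th, s, t) \<Rightarrow> case v of (vp, vth, vs, vt) \<Rightarrow>
      case w of (wp, wth, ws, wt) \<Rightarrow>
      (vp * wth - vth * wp) / (sin p)\<^sup>2 + (vs * wt - vt * ws))"

definition omega2 :: "pt \<Rightarrow> pt \<Rightarrow> pt \<Rightarrow> real" where
  "omega2 x v w = (case x of (p, th, s, t) \<Rightarrow> case v of (vp, vth, vs, vt) \<Rightarrow>
      case w of (wp, wth, ws, wt) \<Rightarrow>
      (vp * ws - vs * wp) / (sin p)\<^sup>2 + (vth * wt - vt * wth))"

text \<open>A symplectomorphism (M\Z, w) -> (M\Z, w'), given by lifts F, G of the map and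
 its inverse to the cover: both smooth, preserve M\Z, descend to the quotient,
 are mutually inverse on the quotient, and F pulls w' back to w.\<close>
definition symplectomorphic_MZ :: "(pt \<Rightarrow> pt \<Rightarrow> pt \<Rightarrow> real) \<Rightarrow> (pt \<Rightarrow> pt \<Rightarrow> pt \<Rightarrow> real) \<Rightarrow> bool" where
  "symplectomorphic_MZ w w' \<longleftrightarrow> (\<exists>F G :: pt \<Rightarrow> pt.
      smooth_on MZ F \<and> smooth_on MZ G \<and> F ` MZ \<subseteq> MZ \<and> G ` MZ \<subseteq> MZ \<and>
      (\<forall>x\<in>MZ. \<forall>y\<in>MZ. same_pt x y \<longrightarrow> same_pt (F x) (F y) \<and> same_pt (G x) (G y)) \<and>
      (\<forall>x\<in>MZ. same_pt (G (F x)) x \<and> same_pt (F (G x)) x) \<and>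
      (\<forall>x\<in>MZ. \<forall>v w0. w' (F x) (frechet_derivative F (at x) v) (frechet_derivative F (at x) w0)
                        = w x v w0))"

end

theory Submission
  imports Defs
begin


lemma Ck_on_cong:
  assumes "open U"
  shows "(\<forall>x\<in>U. f x = g x) \<Longrightarrow> Ck_on k U f \<Longrightarrow> Ck_on k U g"
proof (induction k arbitrary: f g)
  case 0 then show ?case using continuous_on_cong by force
next
  case (Suc k)
  have d: "f differentiable_on U" and c: "\<forall>v. Ck_on k U (\<lambda>x. frechet_derivative f (at x) v)"
    using Suc.prems by auto
  have hf: "(f has_derivative frechet_derivative f (at x)) (at x)" if "x \<in> U" for x
    using d that assms by (meson differentiable_on_eq_differentiable_at frechet_derivative_works)
  have hg: "(g has_derivative frechet_derivative f (at x)) (at x)" if "x \<in> U" for x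
    using has_derivative_transform_within_open[OF hf[OF that] assms that] Suc.prems(1) by blast
  have eq: "frechet_derivative g (at x) = frechet_derivative f (at x)" if "x \<in> U" for x
    using frechet_derivative_at[OF hg[OF that]] by simp
  have "g differentiable_on U"
    using hg assms differentiable_on_eq_differentiable_at differentiable_def by blast
  moreover have "Ck_on k U (\<lambda>x. frechet_derivative g (at x) v)" for v
    using Suc.IH[of "\<lambda>x. frechet_derivative f (at x) v" "\<lambda>x. frechet_derivative g (at x) v"] c eq by auto
  ultimately show ?case by simp
qed

lemma Ck_closed:
  assumes "open U"
    and cl: "\<And>f. f \<in> S \<Longrightarrow> \<exists>f'. (\<forall>x\<in>U. (f has_derivative (\<lambda>v. f' v x)) (at x)) \<and> (\<forall>v. f' v \<in> S)"
  shows "f \<in> S \<Longrightarrow> Ck_on k U f"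
proof (induction k arbitrary: f)
  case 0
  then obtain f' where "\<forall>x\<in>U. (f has_derivative (\<lambda>v. f' v x)) (at x)" using cl by blast
  then show ?case
    by (simp, meson continuous_at_imp_continuous_on has_derivative_continuous)
next
  case (Suc k)
  then obtain f' where h: "\<forall>x\<in>U. (f has_derivative (\<lambda>v. f' v x)) (at x)" and s: "\<forall>v. f' v \<in> S"
    using cl by blast
  have "f differentiable_on U"
    using h assms differentiable_on_eq_differentiable_at differentiable_def by blast
  moreover have "Ck_on k U (\<lambda>x. frechet_derivative f (at x) v)" for v
  proof -
    have "Ck_on k U (f' v)" using Suc.IH[of "f' v"] s by simp
    moreover have "\<forall>x\<in>U. f' v x = frechet_derivative f (at x) v"
      using h frechet_derivative_at by metis
    ultimately show ?thesis using Ck_on_cong[OF assms(1), of "f' v" _ k] by simp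
  qed
  ultimately show ?case by simp
qed

lemma smooth_closed:
  assumes "open U"
    and cl: "\<And>f. f \<in> S \<Longrightarrow> \<exists>f'. (\<forall>x\<in>U. (f has_derivative (\<lambda>v. f' v x)) (at x)) \<and> (\<forall>v. f' v \<in> S)"
    and "f \<in> S"
  shows "smooth_on U f"
  unfolding smooth_on_def using Ck_closed[OF assms(1) cl assms(3)] by blast



inductive_set CC :: "(pt \<Rightarrow> real) set" where
  cst: "(\<lambda>x. c) \<in> CC"
| c1: "(\<lambda>x. fst x) \<in> CC"
| c2: "(\<lambda>x. fst (snd x)) \<in> CC"
| c3: "(\<lambda>x. fst (snd (snd x))) \<in> CC"
| c4: "(\<lambda>x. snd (snd (snd x))) \<in> CC"
| sn: "(\<lambda>x. sin (fst x)) \<in> CC"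
| cs: "(\<lambda>x. cos (fst x)) \<in> CC"
| isn: "(\<lambda>x. inverse (sin (fst x))) \<in> CC"
| at3: "(\<lambda>x. arctan (fst (snd (snd x)))) \<in> CC"
| at4: "(\<lambda>x. arctan (snd (snd (snd x)))) \<in> CC"
| i3: "(\<lambda>x. inverse (1 + (fst (snd (snd x)))^2)) \<in> CC"
| i4: "(\<lambda>x. inverse (1 + (snd (snd (snd x)))^2)) \<in> CC"
| add: "f \<in> CC \<Longrightarrow> g \<in> CC \<Longrightarrow> (\<lambda>x. f x + g x) \<in> CC"
| mul: "f \<in> CC \<Longrightarrow> g \<in> CC \<Longrightarrow> (\<lambda>x. f x * g x) \<in> CC"

lemma one_plus_sq_ne: "1 + y*y \<noteq> (0::real)"
  by (smt (verit) zero_le_square)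

lemma CC_mul3: "f \<in> CC \<Longrightarrow> g \<in> CC \<Longrightarrow> h \<in> CC \<Longrightarrow> (\<lambda>x. f x * g x * h x) \<in> CC"
  by (intro CC.mul)

lemma open_MZ: "open MZ"
proof -
  have "MZ = {x. sin (fst x) \<noteq> 0}" unfolding MZ_def by auto
  moreover have "open {x::pt. sin (fst x) \<noteq> (\<lambda>_. 0) x}"
    by (rule open_Collect_neq) (auto intro!: continuous_intros)
  ultimately show ?thesis by simp
qed

lemma CC_deriv:
  assumes "f \<in> CC"
  shows "\<exists>f'. (\<forall>x\<in>MZ. (f has_derivative (\<lambda>v. f' v x)) (at x)) \<and> (\<forall>v. f' v \<in> CC)"
  using assms
proof induction
  case (cst c)
  show ?case
    apply (rule exI[of _ "\<lambda>v x. 0"], intro conjI)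
    subgoal by (auto intro: CC.cst)
    subgoal by (intro allI CC.intros)
    done
next
  case c1
  show ?case
    apply (rule exI[of _ "\<lambda>v x. fst v"], intro conjI)
    subgoal by (auto intro!: derivative_eq_intros)
    subgoal by (intro allI CC.intros)
    done
next
  case c2
  show ?case
    apply (rule exI[of _ "\<lambda>v x. fst (snd v)"], intro conjI)
    subgoal by (auto intro!: derivative_eq_intros)
    subgoal by (intro allI CC.intros)
    done
next
  case c3
  show ?case
    apply (rule exI[of _ "\<lambda>v x. fst (snd (snd v))"], intro conjI)
    subgoal by (auto intro!: derivative_eq_intros)
    subgoal by (intro allI CC.intros)
    done
next
  case c4
  show ?case
    apply (rule exI[of _ "\<lambda>v x. snd (snd (snd v))"], intro conjI)
    subgoal by (auto intro!: derivative_eq_intros)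
    subgoal by (intro allI CC.intros)
    done
next
  case sn
  show ?case
    apply (rule exI[of _ "\<lambda>v x. fst v * cos (fst x)"], intro conjI)
    subgoal by (auto intro!: derivative_eq_intros)
    subgoal by (intro allI CC.intros)
    done
next
  case cs
  show ?case
    apply (rule exI[of _ "\<lambda>v x. (- fst v) * sin (fst x)"], intro conjI)
    subgoal by (auto intro!: derivative_eq_intros)
    subgoal by (intro allI CC.intros)
    done
next
  case isn
  show ?case
  proof (rule exI[of _ "\<lambda>v x. (- fst v) * cos (fst x) * inverse (sin (fst x)) * inverse (sin (fst x))"], intro conjI ballI allI)
    fix x :: pt assume "x \<in> MZ"
    then have "sin (fst x) \<noteq> 0" unfolding MZ_def by auto
    then show "((\<lambda>x. inverse (sin (fst x))) has_derivative
       (\<lambda>v. (- fst v) * cos (fst x) * inverse (sin (fst x)) * inverse (sin (fst x)))) (at x)"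
      by (auto intro!: derivative_eq_intros simp: field_simps power2_eq_square)
  next
    fix v :: pt
    show "(\<lambda>x. (- fst v) * cos (fst x) * inverse (sin (fst x)) * inverse (sin (fst x))) \<in> CC"
      by (intro CC.intros)
  qed
next
  case at3
  show ?case
    apply (rule exI[of _ "\<lambda>v x. fst (snd (snd v)) * inverse (1 + (fst (snd (snd x)))^2)"], intro conjI)
    subgoal by (auto intro!: derivative_eq_intros simp: field_simps)
    subgoal by (intro allI CC.intros)
    done
next
  case at4
  show ?case
    apply (rule exI[of _ "\<lambda>v x. snd (snd (snd v)) * inverse (1 + (snd (snd (snd x)))^2)"], intro conjI)
    subgoal by (auto intro!: derivative_eq_intros simp: field_simps)
    subgoal by (intro allI CC.intros)
    done
next
  case i3
  show ?case
    apply (rule exI[of _ "\<lambda>v x. (-2 * fst (snd (snd v))) * fst (snd (snd x)) * inverse (1 + (fst (snd (snd x)))^2) * inverse (1 + (fst (snd (snd x)))^2)"], intro conjI)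
    subgoal by (auto intro!: derivative_eq_intros simp: field_simps power2_eq_square one_plus_sq_ne)
    subgoal by (intro allI CC.intros)
    done
next
  case i4
  show ?case
    apply (rule exI[of _ "\<lambda>v x. (-2 * snd (snd (snd v))) * snd (snd (snd x)) * inverse (1 + (snd (snd (snd x)))^2) * inverse (1 + (snd (snd (snd x)))^2)"], intro conjI)
    subgoal by (auto intro!: derivative_eq_intros simp: field_simps power2_eq_square one_plus_sq_ne)
    subgoal by (intro allI CC.intros)
    done
next
  case (add f g)
  then obtain f' g' where f: "\<forall>x\<in>MZ. (f has_derivative (\<lambda>v. f' v x)) (at x)" "\<forall>v. f' v \<in> CC"
    and g: "\<forall>x\<in>MZ. (g has_derivative (\<lambda>v. g' v x)) (at x)" "\<forall>v. g' v \<in> CC" by blast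
  show ?case
    by (rule exI[of _ "\<lambda>v x. f' v x + g' v x"]) (use f g in \<open>auto intro!: CC.intros derivative_eq_intros\<close>)
next
  case (mul f g)
  then obtain f' g' where f: "\<forall>x\<in>MZ. (f has_derivative (\<lambda>v. f' v x)) (at x)" "\<forall>v. f' v \<in> CC"
    and g: "\<forall>x\<in>MZ. (g has_derivative (\<lambda>v. g' v x)) (at x)" "\<forall>v. g' v \<in> CC" by blast
  show ?case
    by (rule exI[of _ "\<lambda>v x. f x * g' v x + f' v x * g x"]) (use f g mul in \<open>auto intro!: CC.intros derivative_eq_intros\<close>)
qed



definition C4 :: "(pt \<Rightarrow> pt) set" where
  "C4 = {F. (\<lambda>x. fst (F x)) \<in> CC \<and> (\<lambda>x. fst (snd (F x))) \<in> CC \<and>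
             (\<lambda>x. fst (snd (snd (F x)))) \<in> CC \<and> (\<lambda>x. snd (snd (snd (F x)))) \<in> CC}"

lemma C4_deriv:
  assumes "F \<in> C4"
  shows "\<exists>F'. (\<forall>x\<in>MZ. (F has_derivative (\<lambda>v. F' v x)) (at x)) \<and> (\<forall>v. F' v \<in> C4)"
proof -
  obtain f1 where f1: "\<forall>x\<in>MZ. ((\<lambda>x. fst (F x)) has_derivative (\<lambda>v. f1 v x)) (at x)" "\<forall>v. f1 v \<in> CC"
    using CC_deriv assms unfolding C4_def by blast
  obtain f2 where f2: "\<forall>x\<in>MZ. ((\<lambda>x. fst (snd (F x))) has_derivative (\<lambda>v. f2 v x)) (at x)" "\<forall>v. f2 v \<in> CC"
    using CC_deriv assms unfolding C4_def by blast
  obtain f3 where f3: "\<forall>x\<in>MZ. ((\<lambda>x. fst (snd (snd (F x)))) has_derivative (\<lambda>v. f3 v x)) (at x)" "\<forall>v. f3 v \<in> CC"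
    using CC_deriv assms unfolding C4_def by blast
  obtain f4 where f4: "\<forall>x\<in>MZ. ((\<lambda>x. snd (snd (snd (F x)))) has_derivative (\<lambda>v. f4 v x)) (at x)" "\<forall>v. f4 v \<in> CC"
    using CC_deriv assms unfolding C4_def by blast
  have eqF: "F = (\<lambda>x. (fst (F x), fst (snd (F x)), fst (snd (snd (F x))), snd (snd (snd (F x)))))"
    by simp
  show ?thesis
  proof (rule exI[of _ "\<lambda>v x. (f1 v x, f2 v x, f3 v x, f4 v x)"], intro conjI ballI allI)
    fix x assume x: "x \<in> MZ"
    show "(F has_derivative (\<lambda>v. (f1 v x, f2 v x, f3 v x, f4 v x))) (at x)"
      by (subst eqF) (intro has_derivative_Pair f1(1)[rule_format, OF x] f2(1)[rule_format, OF x]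
            f3(1)[rule_format, OF x] f4(1)[rule_format, OF x])
  next
    fix v show "(\<lambda>x. (f1 v x, f2 v x, f3 v x, f4 v x)) \<in> C4"
      unfolding C4_def using f1(2)[rule_format, of v] f2(2)[rule_format, of v]
        f3(2)[rule_format, of v] f4(2)[rule_format, of v] by simp
  qed
qed

lemma C4_smooth: "F \<in> C4 \<Longrightarrow> smooth_on MZ F"
  by (rule smooth_closed[OF open_MZ C4_deriv])

definition FF :: "pt \<Rightarrow> pt" where
  "FF x = (pi/2 + arctan (fst (snd (snd x))), fst (snd x), snd (snd (snd x)), cos (fst x) / sin (fst x))"

definition GG :: "pt \<Rightarrow> pt" where
  "GG x = (pi/2 - arctan (snd (snd (snd x))), fst (snd x), - (cos (fst x) / sin (fst x)), fst (snd (snd x)))"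

lemma FF_C4: "FF \<in> C4"
  unfolding C4_def FF_def divide_inverse by (simp, intro conjI CC.intros)

lemma GG_C4: "GG \<in> C4"
proof -
  have "(\<lambda>x::pt. pi/2 - arctan (snd (snd (snd x)))) = (\<lambda>x. pi/2 + (-1) * arctan (snd (snd (snd x))))"
    by auto
  moreover have "(\<lambda>x::pt. - (cos (fst x) / sin (fst x))) = (\<lambda>x. (-1) * cos (fst x) * inverse (sin (fst x)))"
    by (auto simp: divide_inverse)
  ultimately show ?thesis
    unfolding C4_def GG_def mem_Collect_eq fst_conv snd_conv by (simp only:, intro conjI CC.intros)
qed



lemma sin_int_pi: "sin (of_int a * pi) = 0"
  by (simp add: sin_times_pi_eq_0)

lemma cos_int_pi_ne: "cos (of_int a * pi) \<noteq> 0"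
  using sin_cos_squared_add[of "of_int a * pi"] sin_int_pi[of a] by auto

lemma sin_shift_ne: "sin p \<noteq> 0 \<Longrightarrow> sin (p + of_int a * pi) \<noteq> 0"
  using cos_int_pi_ne[of a] by (simp add: sin_add sin_int_pi)

lemma cot_shift: "cos (p + of_int a * pi) / sin (p + of_int a * pi) = cos p / sin p"
proof -
  have "cos (p + of_int a * pi) / sin (p + of_int a * pi) = (cos p * cos (of_int a * pi)) / (sin p * cos (of_int a * pi))"
    by (simp add: sin_add cos_add sin_int_pi)
  also have "\<dots> = cos p / sin p" using cos_int_pi_ne[of a] by simp
  finally show ?thesis .
qed

lemma sin_half_plus: "sin (pi/2 + x) = cos x"
  by (simp add: sin_add)
lemma sin_half_minus: "sin (pi/2 - x) = cos x"
  by (simp add: sin_diff)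
lemma cos_half_plus: "cos (pi/2 + x) = - sin x"
  by (simp add: cos_add)
lemma cos_half_minus: "cos (pi/2 - x) = sin x"
  by (simp add: cos_diff)

lemma key:
  assumes "sin p \<noteq> 0"
  shows "\<exists>a::int. p = pi/2 - arctan (cos p / sin p) + of_int a * pi"
proof -
  define k where "k = \<lfloor>p / pi\<rfloor>"
  define q where "q = p - of_int k * pi"
  have "of_int k \<le> p / pi" "p / pi < of_int k + 1" unfolding k_def by linarith+
  then have "of_int k * pi \<le> p" "p < (of_int k + 1) * pi"
    by (simp_all add: field_simps)
  then have q0: "0 \<le> q" and q1: "q < pi" unfolding q_def by (simp_all add: algebra_simps)
  have pq: "p = q + of_int k * pi" unfolding q_def by simp
  have "sin q \<noteq> 0"
    using sin_shift_ne[OF assms, of "-k"] unfolding q_def by (simp add: algebra_simps)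
  then have "q \<noteq> 0" by auto
  with q0 have q0': "0 < q" by simp
  have "cos p / sin p = cos q / sin q" using cot_shift[of q k] pq by simp
  also have "\<dots> = tan (pi/2 - q)" by (simp add: tan_def sin_half_minus cos_half_minus)
  finally have "arctan (cos p / sin p) = pi/2 - q"
    using arctan_tan[of "pi/2 - q"] q0' q1 by simp
  then show ?thesis using pq by (intro exI[of _ k]) simp
qed

lemma cot_arctan_plus: "- (cos (pi/2 + arctan s) / sin (pi/2 + arctan s)) = s"
  by (simp add: sin_half_plus cos_half_plus) (metis tan_arctan tan_def)

lemma cot_arctan_minus: "cos (pi/2 - arctan s) / sin (pi/2 - arctan s) = s"
  by (simp add: sin_half_minus cos_half_minus) (metis tan_arctan tan_def)



lemma four_sq_ne: "4 + 4 * (y * y) \<noteq> (0::real)"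
  by (smt (verit) zero_le_square)

lemma FF_MZ: "FF ` MZ \<subseteq> MZ"
  by (auto simp: MZ_def FF_def sin_half_plus)

lemma GG_MZ: "GG ` MZ \<subseteq> MZ"
  by (auto simp: MZ_def GG_def sin_half_minus)

lemma FF_desc: "same_pt x y \<Longrightarrow> same_pt (FF x) (FF y)"
proof -
  assume h: "same_pt x y"
  obtain p th s t where x: "x = (p, th, s, t)" by (metis prod.exhaust)
  obtain p' th' s' t' where y: "y = (p', th', s', t')" by (metis prod.exhaust)
  from h obtain a b :: int where "p' = p + of_int a * pi" "th' = th + of_int b * pi" "s' = s" "t' = t"
    unfolding x y same_pt_def by auto
  then show ?thesis unfolding x y same_pt_def FF_def
    by (auto simp: cot_shift intro: exI[of _ 0])
qed

lemma GG_desc: "same_pt x y \<Longrightarrow> same_pt (GG x) (GG y)"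
proof -
  assume h: "same_pt x y"
  obtain p th s t where x: "x = (p, th, s, t)" by (metis prod.exhaust)
  obtain p' th' s' t' where y: "y = (p', th', s', t')" by (metis prod.exhaust)
  from h obtain a b :: int where "p' = p + of_int a * pi" "th' = th + of_int b * pi" "s' = s" "t' = t"
    unfolding x y same_pt_def by auto
  then show ?thesis unfolding x y same_pt_def GG_def
    by (auto simp: cot_shift intro: exI[of _ 0])
qed

lemma GF: "x \<in> MZ \<Longrightarrow> same_pt (GG (FF x)) x"
proof -
  assume h: "x \<in> MZ"
  obtain p th s t where x: "x = (p, th, s, t)" by (metis prod.exhaust)
  have "sin p \<noteq> 0" using h x MZ_def by auto
  then obtain a :: int where a: "p = pi/2 - arctan (cos p / sin p) + of_int a * pi" using key by blast
  have "\<exists>aa b::int. p = (pi/2 - arctan (cos p / sin p)) + of_int aa * pi \<and> th = th + of_int b * pi"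
    apply (rule exI[of _ a], rule exI[of _ 0]) using a by simp
  then show ?thesis unfolding x same_pt_def GG_def FF_def
    using cot_arctan_plus[of s] by simp
qed

lemma FG: "x \<in> MZ \<Longrightarrow> same_pt (FF (GG x)) x"
proof -
  assume h: "x \<in> MZ"
  obtain p th s t where x: "x = (p, th, s, t)" by (metis prod.exhaust)
  have "sin p \<noteq> 0" using h x MZ_def by auto
  then obtain a :: int where a: "p = pi/2 - arctan (cos p / sin p) + of_int a * pi" using key by blast
  have e: "arctan (- (cos p / sin p)) = - arctan (cos p / sin p)" by (simp add: arctan_minus)
  have "\<exists>aa b::int. p = (pi/2 - arctan (cos p / sin p)) + of_int aa * pi \<and> th = th + of_int b * pi"
    apply (rule exI[of _ a], rule exI[of _ 0]) using a by simp
  then show ?thesis unfolding x same_pt_def GG_def FF_def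
    using cot_arctan_minus[of t] e by simp
qed

lemma FF_deriv:
  assumes "x \<in> MZ"
  shows "(FF has_derivative (\<lambda>v. (fst (snd (snd v)) / (1 + (fst (snd (snd x)))^2), fst (snd v),
     snd (snd (snd v)), - fst v / (sin (fst x))^2))) (at x)"
proof -
  have s: "sin (fst x) \<noteq> 0" using assms unfolding MZ_def by (cases x) auto
  show ?thesis
  proof -
    have cc: "cos (fst x) * cos (fst x) = 1 - sin (fst x) * sin (fst x)"
      using sin_cos_squared_add[of "fst x"] by (simp add: power2_eq_square)
    show "?thesis" unfolding FF_def
      using s by (auto intro!: derivative_eq_intros ext simp: field_simps power2_eq_square one_plus_sq_ne four_sq_ne cc)
  qed
qed

lemma sympl: "x \<in> MZ \<Longrightarrow> omega2 (FF x) (frechet_derivative FF (at x) v) (frechet_derivative FF (at x) w0) = omega1 x v w0"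
proof -
  assume h: "x \<in> MZ"
  note e = frechet_derivative_at[OF FF_deriv[OF h], symmetric]
  obtain p th s t where x: "x = (p, th, s, t)" by (metis prod.exhaust)
  obtain v1 v2 v3 v4 where v: "v = (v1, v2, v3, v4)" by (metis prod.exhaust)
  obtain w1 w2 w3 w4 where w: "w0 = (w1, w2, w3, w4)" by (metis prod.exhaust)
  have sp: "sin p \<noteq> 0" using h x MZ_def by auto
  have c: "(sin (pi/2 + arctan s))^2 = 1 / (1 + s^2)"
    by (simp add: sin_half_plus cos_arctan power_divide)
  have pos: "1 + s^2 \<noteq> 0" using one_plus_sq_ne[of s] by (simp add: power2_eq_square)
  have "omega2 (FF x) (frechet_derivative FF (at x) v) (frechet_derivative FF (at x) w0)
     = ((v3 / (1 + s^2) * w4 - v4 * (w3 / (1 + s^2))) / (1 / (1 + s^2))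
        + (v2 * (- w1 / (sin p)^2) - (- v1 / (sin p)^2) * w2))"
    unfolding e unfolding x v w omega2_def FF_def by (simp only: fst_conv snd_conv prod.case c)
  also have "\<dots> = omega1 x v w0"
  proof -
    have q: "(v3 / (1 + s^2) * w4 - v4 * (w3 / (1 + s^2))) / (1 / (1 + s^2)) = v3 * w4 - v4 * w3"
    proof -
      have gen: "(a / qq * b - c * (d / qq)) / (1 / qq) = a * b - c * d" if "qq \<noteq> 0" for a b c d qq :: real
        using that by (simp add: field_simps)
      show ?thesis using gen[OF pos] .
    qed
    show ?thesis unfolding q unfolding x v w omega1_def using sp by (simp add: field_simps)
  qed
  finally show ?thesis .
qed

theorem lemmaA2:
  shows "symplectomorphic_MZ omega1 omega2"
  unfolding symplectomorphic_MZ_def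
  apply (rule exI[of _ FF], rule exI[of _ GG])
  apply (intro conjI ballI allI impI C4_smooth FF_C4 GG_C4 FF_MZ GG_MZ FF_desc GG_desc GF FG sympl)
  apply assumption+
  done


end
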